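(* Let $d = 2$ and assume $\varphi$ is twice continuously differentiable. For $X \in \mathcal{M}$, the eigenvalues of the Riemannian Hessian of $f$ at $X$ (a self-adjoint operator on the $n$-dimensional space $\mathrm{T}_X\mathcal{M}$) are equal to the eigenvalues of $-L(M)$, where $M$ has entries $m_{ij} = w_{ij}\, h(x_i^\top x_j)$ with $h(t) = t\varphi'(t) - (1-t^2)\varphi''(t)$. Moreover, $X$ is a critical point of $f$ with negative semidefinite Riemannian Hessian if and only if $$X\,\mathrm{ddiag}(X^\top X A) = XA \quad\text{and}\quad \mathrm{ddiag}(X^\top X A) - A \odot X^\top X \succeq L(K),$$ where $A = W \odot \varphi'(X^\top X)$ and $K = W \odot \varphi''(X^\top X) \odot \big(\mathbf{1}\mathbf{1}^\top - (X^\top X)^{\odot 2}\big)$.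
   Context: $\mathcal{M} = (\mathbb{S}^{1})^n = \{X\in\mathbb{R}^{2\times n} : \text{columns } x_i \text{ unit norm}\}$, a Riemannian submanifold of $\mathbb{R}^{2\times n}$ with the Frobenius metric. $W$ is symmetric with nonnegative entries, $f(X) = \frac12\sum_{i,j} w_{ij}\varphi(x_i^\top x_j)$; $\varphi,\varphi',\varphi''$ act entrywise on matrices. For a symmetric $M \in \mathbb{R}^{n\times n}$, $L(M) = \mathrm{diag}(M\mathbf{1}) - M$ (graph Laplacian), where $\mathrm{diag}(v)$ is the diagonal matrix with diagonal $v$ and $\mathbf{1}$ is the all-ones vector. $\odot$ is the entrywise product, $(\cdot)^{\odot 2}$ entrywise squaring, $\mathrm{ddiag}$ zeroes off-diagonal entries, $\succeq$ is the Loewner order. *)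

theory Defs
  imports "HOL-Analysis.Analysis"
begin

text \<open>Matrices are HOL-Analysis matrices: X :: real^'n^2 is a 2 x n matrix
  (rows indexed by the type 2, columns by 'n); W :: real^'n^'n.\<close>

definition hadamard :: "real^'n^'m \<Rightarrow> real^'n^'m \<Rightarrow> real^'n^'m" where
  "hadamard A B = (\<chi> i j. A$i$j * B$i$j)"

definition entrywise :: "(real \<Rightarrow> real) \<Rightarrow> real^'n^'m \<Rightarrow> real^'n^'m" where
  "entrywise g A = (\<chi> i j. g (A$i$j))"

definition diag_mat :: "real^'n \<Rightarrow> real^'n^'n" where
  "diag_mat v = (\<chi> i j. if i = j then v$i else 0)"

definition ddiag :: "real^'n^'n \<Rightarrow> real^'n^'n" where
  "ddiag A = (\<chi> i j. if i = j then A$i$j else 0)"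

definition laplacian :: "real^'n^'n \<Rightarrow> real^'n^'n" where
  "laplacian M = diag_mat (M *v vec 1) - M"

definition psd :: "real^'n^'n \<Rightarrow> bool" where
  "psd P \<longleftrightarrow> (\<forall>v. 0 \<le> v \<bullet> (P *v v))"

definition loewner_ge :: "real^'n^'n \<Rightarrow> real^'n^'n \<Rightarrow> bool" where
  "loewner_ge P Q \<longleftrightarrow> psd (P - Q)"

definition circ_manifold :: "(real^'n^2) set" where
  "circ_manifold = {X. \<forall>i. norm (column i X) = 1}"

definition tangent_space :: "real^'n^2 \<Rightarrow> (real^'n^2) set" where
  "tangent_space X = {U. \<forall>i. column i X \<bullet> column i U = 0}"

text \<open>Orthogonal projection onto the tangent space at X (for X on the manifold),
  extended smoothly to all X: Proj_X(Z) = Z - X ddiag(X^T Z).\<close>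
definition proj :: "real^'n^2 \<Rightarrow> real^'n^2 \<Rightarrow> real^'n^2" where
  "proj X Z = Z - X ** ddiag (transpose X ** Z)"

text \<open>The cost, naturally extended to all of R^(2 x n).\<close>
definition fbar :: "real^'n^'n \<Rightarrow> (real \<Rightarrow> real) \<Rightarrow> real^'n^2 \<Rightarrow> real" where
  "fbar W \<phi> X = (1/2) * (\<Sum>i\<in>UNIV. \<Sum>j\<in>UNIV. W$i$j * \<phi> (column i X \<bullet> column j X))"

definition egrad :: "(real^'n^2 \<Rightarrow> real) \<Rightarrow> real^'n^2 \<Rightarrow> real^'n^2" where
  "egrad F X = (SOME G. (F has_derivative (\<lambda>H. G \<bullet> H)) (at X))"

definition rgrad :: "(real^'n^2 \<Rightarrow> real) \<Rightarrow> real^'n^2 \<Rightarrow> real^'n^2" where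
  "rgrad F X = proj X (egrad F X)"

text \<open>Riemannian Hessian of a Riemannian submanifold of a Euclidean space:
  Hess f(X)[U] = Proj_X (D Gbar(X)[U]) with Gbar the smooth extension
  Y \<mapsto> Proj_Y(egrad Y) of the Riemannian gradient.\<close>
definition rhess :: "(real^'n^2 \<Rightarrow> real) \<Rightarrow> real^'n^2 \<Rightarrow> real^'n^2 \<Rightarrow> real^'n^2" where
  "rhess F X U = proj X ((SOME D. ((\<lambda>Y. rgrad F Y) has_derivative D) (at X)) U)"

end

theory Submission
  imports Defs
begin


lemma has_derivative_vecI:
  fixes f :: "'a::real_normed_vector \<Rightarrow> 'b::real_inner^'m"
  assumes "\<And>i. ((\<lambda>x. f x $ i) has_derivative (\<lambda>h. f' h $ i)) F"
  shows "(f has_derivative f') F"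
proof -
  have e: "\<And>x. (\<Sum>i\<in>UNIV. (\<chi> j. if j = i then x $ i else 0)) = (x::'b^'m)"
    by (simp add: vec_eq_iff sum_component if_distrib cong: if_cong)
  have "((\<lambda>x. \<Sum>i\<in>UNIV. (\<chi> j. if j = i then f x $ i else 0)) has_derivative (\<lambda>h. \<Sum>i\<in>UNIV. (\<chi> j. if j = i then f' h $ i else 0))) F"
  proof (intro has_derivative_sum)
    fix i
    have bl: "bounded_linear (\<lambda>y::'b. (\<chi> j. if j = i then y else 0) :: 'b^'m)"
    proof -
      have "bounded_linear (axis i :: 'b \<Rightarrow> 'b^'m)"
      proof (rule bounded_linear_intro[where K=1])
        show "norm (axis i x) \<le> norm x * 1" for x :: 'b
          by (simp add: norm_eq_sqrt_inner inner_axis_axis)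
      qed (auto simp: axis_def vec_eq_iff)
      then show ?thesis unfolding axis_def .
    qed
    show "((\<lambda>x. (\<chi> j. if j = i then f x $ i else 0)::'b^'m) has_derivative (\<lambda>h. (\<chi> j. if j = i then f' h $ i else 0))) F"
      using bounded_linear.has_derivative[OF bl assms[of i]] .
  qed
  then show ?thesis unfolding e .
qed

lemma has_derivative_matI:
  fixes f :: "'a::real_normed_vector \<Rightarrow> real^'n^'m"
  assumes "\<And>k i. ((\<lambda>x. f x $ k $ i) has_derivative (\<lambda>h. f' h $ k $ i)) F"
  shows "(f has_derivative f') F"
  by (intro has_derivative_vecI assms)

lemma hd_entry[derivative_intros]: "((\<lambda>Y::real^'n^'m. Y$k$i) has_derivative (\<lambda>H. H$k$i)) F"
  by (rule bounded_linear_imp_has_derivative) (intro bounded_linear_compose[OF bounded_linear_vec_nth] bounded_linear_vec_nth)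



definition tt :: "real^'n^2 \<Rightarrow> 'n \<Rightarrow> 'n \<Rightarrow> real" where
  "tt Y i j = (\<Sum>k\<in>UNIV. Y$k$i * Y$k$j)"

definition dtt :: "real^'n^2 \<Rightarrow> real^'n^2 \<Rightarrow> 'n \<Rightarrow> 'n \<Rightarrow> real" where
  "dtt Y H i j = (\<Sum>k\<in>UNIV. H$k$i * Y$k$j + Y$k$i * H$k$j)"

lemma tt_deriv: "((\<lambda>Y. tt Y i j) has_derivative (\<lambda>H. dtt Y H i j)) (at Y)"
  unfolding tt_def dtt_def
  by (auto intro!: derivative_eq_intros simp: algebra_simps)

lemma comp_tt_deriv:
  assumes "\<forall>t. (g has_real_derivative g' t) (at t)"
  shows "((\<lambda>Y. g (tt Y i j)) has_derivative (\<lambda>H. dtt Y H i j * g' (tt Y i j))) (at Y)"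
  using DERIV_compose_FDERIV[OF assms[rule_format] tt_deriv] .

lemma tt_sym: "tt Y i j = tt Y j i"
  unfolding tt_def by (simp add: mult.commute)

lemma tt_mat: "(transpose Y ** Y) $ i $ j = tt Y i j"
  by (simp add: tt_def transpose_def matrix_matrix_mult_def)

lemma tt_col: "column i Y \<bullet> column j Y = tt Y i j"
  by (simp add: tt_def column_def inner_vec_def)

lemma fbar_eq: "fbar W \<phi> Y = (1/2) * (\<Sum>i\<in>UNIV. \<Sum>j\<in>UNIV. W$i$j * \<phi> (tt Y i j))"
  by (simp add: fbar_def tt_col)

lemma inner_mat: "(A::real^'n^'m) \<bullet> B = (\<Sum>k\<in>UNIV. \<Sum>i\<in>UNIV. A$k$i * B$k$i)"
  by (simp add: inner_vec_def)

lemma Wsym: "transpose W = W \<Longrightarrow> W$j$i = W$i$j"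
  by (metis transpose_def vec_lambda_beta)

lemma fbar_deriv:
  fixes W :: "real^'n^'n"
  assumes sym: "transpose W = W" and d: "\<forall>t. (\<phi> has_real_derivative \<phi>' t) (at t)"
  shows "(fbar W \<phi> has_derivative (\<lambda>H. (Y ** hadamard W (entrywise \<phi>' (transpose Y ** Y))) \<bullet> H)) (at Y)"
proof -
  have "((\<lambda>Y. (1/2) * (\<Sum>i\<in>UNIV. \<Sum>j\<in>UNIV. W$i$j * \<phi> (tt Y i j))) has_derivative
        (\<lambda>H. (1/2) * (\<Sum>i\<in>UNIV. \<Sum>j\<in>UNIV. W$i$j * (dtt Y H i j * \<phi>' (tt Y i j))))) (at Y)"
    by (intro has_derivative_mult_right has_derivative_sum has_derivative_mult_right comp_tt_deriv d)
  moreover have "(1/2) * (\<Sum>i\<in>UNIV. \<Sum>j\<in>UNIV. W$i$j * (dtt Y H i j * \<phi>' (tt Y i j)))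
     = (Y ** hadamard W (entrywise \<phi>' (transpose Y ** Y))) \<bullet> H" for H
  proof -
    define a where "a i j = W$i$j * \<phi>' (tt Y i j)" for i j
    have as: "a i j = a j i" for i j unfolding a_def using Wsym[OF sym] tt_sym by metis
    have "(\<Sum>i\<in>UNIV. \<Sum>j\<in>UNIV. W$i$j * (dtt Y H i j * \<phi>' (tt Y i j)))
        = (\<Sum>i\<in>UNIV. \<Sum>j\<in>UNIV. a i j * (\<Sum>k\<in>UNIV. H$k$i * Y$k$j))
        + (\<Sum>i\<in>UNIV. \<Sum>j\<in>UNIV. a i j * (\<Sum>k\<in>UNIV. Y$k$i * H$k$j))"
      by (simp add: a_def dtt_def sum.distrib algebra_simps sum_distrib_left)
    also have "(\<Sum>i\<in>UNIV. \<Sum>j\<in>UNIV. a i j * (\<Sum>k\<in>UNIV. Y$k$i * H$k$j))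
        = (\<Sum>i\<in>UNIV. \<Sum>j\<in>UNIV. a i j * (\<Sum>k\<in>UNIV. H$k$i * Y$k$j))"
      by (subst sum.swap) (simp add: as mult.commute)
    finally have 1: "(\<Sum>i\<in>UNIV. \<Sum>j\<in>UNIV. W$i$j * (dtt Y H i j * \<phi>' (tt Y i j)))
        = 2 * (\<Sum>i\<in>UNIV. \<Sum>j\<in>UNIV. a i j * (\<Sum>k\<in>UNIV. H$k$i * Y$k$j))" by simp
    have 2: "(Y ** hadamard W (entrywise \<phi>' (transpose Y ** Y))) \<bullet> H
       = (\<Sum>k\<in>UNIV. \<Sum>i\<in>UNIV. (\<Sum>j\<in>UNIV. Y$k$j * a i j) * H$k$i)"
    proof -
      have "(Y ** hadamard W (entrywise \<phi>' (transpose Y ** Y)))$k$i = (\<Sum>j\<in>UNIV. Y$k$j * a j i)" for k i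
        by (simp add: matrix_matrix_mult_def hadamard_def entrywise_def tt_def transpose_def a_def)
      then show ?thesis by (simp add: inner_mat as)
    qed
    have 3: "(\<Sum>i\<in>UNIV. \<Sum>j\<in>UNIV. a i j * (\<Sum>k\<in>UNIV. H$k$i * Y$k$j))
          = (\<Sum>i\<in>UNIV. \<Sum>k\<in>UNIV. \<Sum>j\<in>UNIV. Y$k$j * a i j * H$k$i)"
      by (simp add: sum_distrib_left mult_ac) (rule sum.cong, simp, rule sum.swap)
    have 4: "(\<Sum>k\<in>UNIV. \<Sum>i\<in>UNIV. (\<Sum>j\<in>UNIV. Y$k$j * a i j) * H$k$i)
          = (\<Sum>k\<in>UNIV. \<Sum>i\<in>UNIV. \<Sum>j\<in>UNIV. Y$k$j * a i j * H$k$i)"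
      by (simp add: sum_distrib_right)
    show ?thesis unfolding 1 2 3 4 by (simp, rule sum.swap)
  qed
  ultimately show ?thesis unfolding fbar_eq[abs_def] by simp
qed



definition Am :: "real^'n^'n \<Rightarrow> (real \<Rightarrow> real) \<Rightarrow> real^'n^2 \<Rightarrow> real^'n^'n" where
  "Am W p Y = hadamard W (entrywise p (transpose Y ** Y))"

lemma egrad_eq:
  fixes W :: "real^'n^'n"
  assumes sym: "transpose W = W" and d: "\<forall>t. (\<phi> has_real_derivative \<phi>' t) (at t)"
  shows "egrad (fbar W \<phi>) Y = Y ** Am W \<phi>' Y"
  unfolding egrad_def
proof (rule some_equality)
  show "(fbar W \<phi> has_derivative (\<bullet>) (Y ** Am W \<phi>' Y)) (at Y)"
    using fbar_deriv[OF sym d] unfolding Am_def by simp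
  fix G assume "(fbar W \<phi> has_derivative (\<bullet>) G) (at Y)"
  then have "(\<bullet>) G = (\<bullet>) (Y ** Am W \<phi>' Y)"
    using has_derivative_unique fbar_deriv[OF sym d] unfolding Am_def by (metis (no_types))
  then have "G \<bullet> (G - Y ** Am W \<phi>' Y) = (Y ** Am W \<phi>' Y) \<bullet> (G - Y ** Am W \<phi>' Y)" by metis
  then have "(G - Y ** Am W \<phi>' Y) \<bullet> (G - Y ** Am W \<phi>' Y) = 0" by (simp add: inner_diff_left)
  then show "G = Y ** Am W \<phi>' Y" by simp
qed

lemma mult_if0: "(x::real) * (if P then y else 0) = (if P then x * y else 0)" by simp

lemma proj_entry: "proj Y Z $ k $ i = Z$k$i - Y$k$i * (\<Sum>m\<in>UNIV. Y$m$i * Z$m$i)"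
proof -
  have "(Y ** ddiag (transpose Y ** Z)) $ k $ i = Y$k$i * (\<Sum>m\<in>UNIV. Y$m$i * Z$m$i)"
    by (simp add: matrix_matrix_mult_def ddiag_def transpose_def mult_if0)
  then show ?thesis by (simp add: proj_def)
qed

definition gg :: "real^'n^'n \<Rightarrow> (real \<Rightarrow> real) \<Rightarrow> real^'n^2 \<Rightarrow> 2 \<Rightarrow> 'n \<Rightarrow> real" where
  "gg W p Y k i = (\<Sum>j\<in>UNIV. Y$k$j * (W$j$i * p (tt Y j i)))"

definition dgg :: "real^'n^'n \<Rightarrow> (real \<Rightarrow> real) \<Rightarrow> (real \<Rightarrow> real) \<Rightarrow> real^'n^2 \<Rightarrow> real^'n^2 \<Rightarrow> 2 \<Rightarrow> 'n \<Rightarrow> real" where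
  "dgg W p q Y H k i = (\<Sum>j\<in>UNIV. Y$k$j * (W$j$i * (dtt Y H j i * q (tt Y j i))) + H$k$j * (W$j$i * p (tt Y j i)))"

definition RR where
  "RR W p Y k i = gg W p Y k i - Y$k$i * (\<Sum>m\<in>UNIV. Y$m$i * gg W p Y m i)"

definition dRR where
  "dRR W p q Y H k i = dgg W p q Y H k i - (Y$k$i * (\<Sum>m\<in>UNIV. Y$m$i * dgg W p q Y H m i + H$m$i * gg W p Y m i)
       + H$k$i * (\<Sum>m\<in>UNIV. Y$m$i * gg W p Y m i))"

lemma gmat: "(Y ** Am W p Y) $ k $ i = gg W p Y k i"
proof -
  have "Am W p Y $ j $ i = W$j$i * p (tt Y j i)" for j i
    by (simp add: Am_def hadamard_def entrywise_def tt_mat)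
  then show ?thesis by (simp add: matrix_matrix_mult_def gg_def)
qed

lemma rgrad_eq:
  fixes W :: "real^'n^'n"
  assumes sym: "transpose W = W" and d: "\<forall>t. (\<phi> has_real_derivative \<phi>' t) (at t)"
  shows "rgrad (fbar W \<phi>) = (\<lambda>Y. \<chi> k i. RR W \<phi>' Y k i)"
proof
  fix Y
  show "rgrad (fbar W \<phi>) Y = (\<chi> k i. RR W \<phi>' Y k i)"
    unfolding rgrad_def egrad_eq[OF sym d] vec_eq_iff
    by (simp add: proj_entry gmat RR_def)
qed

lemma gg_deriv:
  assumes d: "\<forall>t. (p has_real_derivative q t) (at t)"
  shows "((\<lambda>Y. gg W p Y k i) has_derivative (\<lambda>H. dgg W p q Y H k i)) (at Y)"
  unfolding gg_def dgg_def
  by (intro has_derivative_sum has_derivative_mult hd_entry has_derivative_mult_right comp_tt_deriv d)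

lemma RR_deriv:
  assumes d: "\<forall>t. (p has_real_derivative q t) (at t)"
  shows "((\<lambda>Y. RR W p Y k i) has_derivative (\<lambda>H. dRR W p q Y H k i)) (at Y)"
  unfolding RR_def dRR_def
  apply (rule has_derivative_diff)
   apply (rule gg_deriv[OF d])
  apply (rule has_derivative_mult)
   apply (rule hd_entry)
  apply (rule has_derivative_sum)
  apply (rule has_derivative_mult)
   apply (rule hd_entry)
  apply (rule gg_deriv[OF d])
  done

lemma rhess_eq:
  fixes W :: "real^'n^'n"
  assumes sym: "transpose W = W" and d: "\<forall>t. (\<phi> has_real_derivative \<phi>' t) (at t)"
    and d2: "\<forall>t. (\<phi>' has_real_derivative \<phi>'' t) (at t)"
  shows "rhess (fbar W \<phi>) X U = proj X (\<chi> k i. dRR W \<phi>' \<phi>'' X U k i)"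
proof -
  have D: "((\<lambda>Y. \<chi> k i. RR W \<phi>' Y k i) has_derivative (\<lambda>H. \<chi> k i. dRR W \<phi>' \<phi>'' X H k i)) (at X)"
    by (rule has_derivative_matI, unfold vec_lambda_beta, rule RR_deriv[OF d2])
  have "(SOME D. (rgrad (fbar W \<phi>) has_derivative D) (at X)) = (\<lambda>H. \<chi> k i. dRR W \<phi>' \<phi>'' X H k i)"
    unfolding rgrad_eq[OF sym d]
  proof (rule some_equality)
    show "((\<lambda>Y. \<chi> k i. RR W \<phi>' Y k i) has_derivative (\<lambda>H. \<chi> k i. dRR W \<phi>' \<phi>'' X H k i)) (at X)" by (rule D)
    fix D' assume "((\<lambda>Y. \<chi> k i. RR W \<phi>' Y k i) has_derivative D') (at X)"
    then show "D' = (\<lambda>H. \<chi> k i. dRR W \<phi>' \<phi>'' X H k i)" using D by (rule has_derivative_unique)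
  qed
  then show ?thesis by (simp add: rhess_def)
qed



lemma dRR_sum:
  fixes X U :: "real^'n^2" and W :: "real^'n^'n" and p q :: "real \<Rightarrow> real" and i :: 'n
  defines "gl \<equiv> \<lambda>m l. X$m$l * (W$l$i * p (tt X l i))"
      and "dgl \<equiv> \<lambda>m l. X$m$l * (W$l$i * (dtt X U l i * q (tt X l i))) + U$m$l * (W$l$i * p (tt X l i))"
  defines "dRl \<equiv> \<lambda>m l. dgl m l - (X$m$i * (X$1$i * dgl 1 l + U$1$i * gl 1 l + (X$2$i * dgl 2 l + U$2$i * gl 2 l))
                     + U$m$i * (X$1$i * gl 1 l + X$2$i * gl 2 l))"
  shows "dRR W p q X U m i = (\<Sum>l\<in>UNIV. dRl m l)"
proof -
  have 1: "gg W p X m' i = (\<Sum>l\<in>UNIV. gl m' l)" for m' unfolding gg_def gl_def ..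
  have 2: "dgg W p q X U m' i = (\<Sum>l\<in>UNIV. dgl m' l)" for m' unfolding dgg_def dgl_def ..
  show ?thesis
    unfolding dRR_def sum_2 1 2 dRl_def
    by (simp add: sum_subtractf sum.distrib sum_distrib_left ring_distribs)
qed

lemma proj_sum:
  fixes X :: "real^'n^2"
  assumes "\<And>m. Z$m$i = (\<Sum>l\<in>UNIV. f m l)"
  shows "proj X Z $ k $ i = (\<Sum>l\<in>UNIV. f k l - X$k$i * (X$1$i * f 1 l + X$2$i * f 2 l))"
  unfolding proj_entry sum_2 assms
  by (simp add: sum_subtractf sum.distrib sum_distrib_left ring_distribs)



lemma poly_id:
  fixes a b c d s r w P Q :: real
  assumes u1: "a^2 + b^2 = 1" and u2: "c^2 + d^2 = 1"
  defines "D \<equiv> (-r*d)*a + (r*c)*b + (c*(-s*b) + d*(s*a))"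
  defines "g1 \<equiv> c*(w*P)" and "g2 \<equiv> d*(w*P)"
     and "dg1 \<equiv> c*(w*(D*Q)) + (-r*d)*(w*P)" and "dg2 \<equiv> d*(w*(D*Q)) + (r*c)*(w*P)"
  defines "R1 \<equiv> dg1 - (a*(a*dg1 + (-s*b)*g1 + (b*dg2 + (s*a)*g2)) + (-s*b)*(a*g1+b*g2))"
     and "R2 \<equiv> dg2 - (b*(a*dg1 + (-s*b)*g1 + (b*dg2 + (s*a)*g2)) + (s*a)*(a*g1+b*g2))"
  defines "t \<equiv> c*a + d*b"
  shows "R1 - a*(a*R1 + b*R2) = (w*(t*P - (1-t^2)*Q)*(r - s)) * (-b)"
    and "R2 - b*(a*R1 + b*R2) = (w*(t*P - (1-t^2)*Q)*(r - s)) * a"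
  using u1 u2 unfolding R1_def R2_def dg1_def dg2_def g1_def g2_def D_def t_def
  by algebra+



definition perp :: "real^'n^2 \<Rightarrow> real^'n^2" where
  "perp X = (\<chi> k i. if k = 1 then - X$2$i else X$1$i)"

definition Tm :: "real^'n^2 \<Rightarrow> real^'n \<Rightarrow> real^'n^2" where
  "Tm X \<theta> = (\<chi> k i. \<theta>$i * perp X $ k $ i)"

lemma unit_col: "X \<in> circ_manifold \<Longrightarrow> X$1$i * X$1$i + X$2$i * X$2$i = 1"
proof -
  assume "X \<in> circ_manifold"
  then have "norm (column i X) = 1" by (simp add: circ_manifold_def)
  then have "column i X \<bullet> column i X = 1" by (simp add: norm_eq_1)
  then show ?thesis by (simp add: tt_col tt_def sum_2)
qed

lemma neg_lap_mult: "(- laplacian M *v \<theta>) $ i = (\<Sum>l\<in>UNIV. M$i$l * (\<theta>$l - \<theta>$i))"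
  by (simp add: laplacian_def diag_mat_def matrix_vector_mult_def mult_if0 sum_subtractf
      sum_distrib_right sum_distrib_left algebra_simps)

lemma T1: "Tm X \<theta> $ 1 $ j = \<theta>$j * - X$2$j" by (simp add: Tm_def perp_def)
lemma T2: "Tm X \<theta> $ 2 $ j = \<theta>$j * X$1$j" by (simp add: Tm_def perp_def)
lemma P1: "perp X $ 1 $ j = - X$2$j" by (simp add: perp_def)
lemma P2: "perp X $ 2 $ j = X$1$j" by (simp add: perp_def)

lemma rhess_T:
  fixes W :: "real^'n^'n"
  assumes sym: "transpose W = W" and d: "\<forall>t. (\<phi> has_real_derivative \<phi>' t) (at t)"
    and d2: "\<forall>t. (\<phi>' has_real_derivative \<phi>'' t) (at t)"
    and XM: "X \<in> circ_manifold"
  shows "rhess (fbar W \<phi>) X (Tm X \<theta>) = Tm X ((- laplacian (hadamard W (entrywise (\<lambda>t. t * \<phi>' t - (1 - t^2) * \<phi>'' t)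
                                            (transpose X ** X)))) *v \<theta>)"
proof -
  define U where "U = Tm X \<theta>"
  have "proj X (\<chi> k i. dRR W \<phi>' \<phi>'' X U k i) $ k $ i = Tm X ((- laplacian (hadamard W (entrywise (\<lambda>t. t * \<phi>' t - (1 - t^2) * \<phi>'' t)
                                            (transpose X ** X)))) *v \<theta>) $ k $ i" for k i
  proof -
    define gl where "gl \<equiv> \<lambda>m l. X$m$l * (W$l$i * \<phi>' (tt X l i))"
    define dgl where "dgl \<equiv> \<lambda>m l. X$m$l * (W$l$i * (dtt X U l i * \<phi>'' (tt X l i))) + U$m$l * (W$l$i * \<phi>' (tt X l i))"
    define dRl where "dRl \<equiv> \<lambda>m l. dgl m l - (X$m$i * (X$1$i * dgl 1 l + U$1$i * gl 1 l + (X$2$i * dgl 2 l + U$2$i * gl 2 l))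
                     + U$m$i * (X$1$i * gl 1 l + X$2$i * gl 2 l))"
    have L: "proj X (\<chi> k i. dRR W \<phi>' \<phi>'' X U k i) $ k $ i = (\<Sum>l\<in>UNIV. dRl k l - X$k$i * (X$1$i * dRl 1 l + X$2$i * dRl 2 l))"
      by (rule proj_sum) (simp add: dRR_sum gl_def dgl_def dRl_def)
    have R: "Tm X ((- laplacian (hadamard W (entrywise (\<lambda>t. t * \<phi>' t - (1 - t^2) * \<phi>'' t)
                                            (transpose X ** X)))) *v \<theta>) $ k $ i
      = (\<Sum>l\<in>UNIV. (W$i$l * (tt X i l * \<phi>' (tt X i l) - (1 - (tt X i l)^2) * \<phi>'' (tt X i l))) * (\<theta>$l - \<theta>$i) * perp X $ k $ i)"
      by (simp add: Tm_def neg_lap_mult hadamard_def entrywise_def tt_mat sum_distrib_right)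
    show ?thesis unfolding L R
    proof (rule sum.cong[OF refl])
      fix l
      have ui: "X$1$i * X$1$i + X$2$i * X$2$i = 1" and ul: "X$1$l * X$1$l + X$2$l * X$2$l = 1"
        using unit_col[OF XM] by auto
      define t where "t = tt X l i"
      have te: "t = X$1$l * X$1$i + X$2$l * X$2$i" by (simp add: t_def tt_def sum_2)
      have ts: "tt X i l = t" using tt_sym t_def by metis
      have n21: "((2::2) = 1) = False" by simp
      have ws: "W$i$l = W$l$i" using Wsym[OF sym] by metis
      show "dRl k l - X$k$i * (X$1$i * dRl 1 l + X$2$i * dRl 2 l) =
          (W$i$l * (tt X i l * \<phi>' (tt X i l) - (1 - (tt X i l)^2) * \<phi>'' (tt X i l))) * (\<theta>$l - \<theta>$i) * perp X $ k $ i"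
        using exhaust_2[of k]
      proof (elim disjE)
        assume k: "k = 1"
        show ?thesis unfolding k
          apply (simp only: ts ws dRl_def dgl_def gl_def t_def[symmetric] U_def T1 T2 P1 P2 dtt_def sum_2)
          apply (insert ui ul te, algebra)
          done
      next
        assume k: "k = 2"
        show ?thesis unfolding k
          apply (simp only: ts ws dRl_def dgl_def gl_def t_def[symmetric] U_def T1 T2 P1 P2 dtt_def sum_2)
          apply (insert ui ul te, algebra)
          done
      qed
    qed
  qed
  then show ?thesis
    unfolding rhess_eq[OF sym d d2] U_def[symmetric] by (simp add: vec_eq_iff)
qed



lemma Tm_linear: "linear (Tm X)"
  by (rule linearI) (simp_all add: Tm_def vec_eq_iff algebra_simps)


lemma tangent_entry: "U \<in> tangent_space X \<longleftrightarrow> (\<forall>i. X$1$i * U$1$i + X$2$i * U$2$i = 0)"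
  by (simp add: tangent_space_def column_def inner_vec_def sum_2)

lemma Tm_tangent: "Tm X \<theta> \<in> tangent_space X"
  by (simp add: tangent_entry T1 T2 algebra_simps)


lemma Tm_inner:
  assumes XM: "X \<in> circ_manifold"
  shows "Tm X x \<bullet> Tm X y = x \<bullet> y"
proof -
  have "Tm X x \<bullet> Tm X y = (\<Sum>i\<in>UNIV. x$i * y$i * (X$1$i * X$1$i + X$2$i * X$2$i))"
    by (simp add: inner_mat sum_2 T1 T2 sum.distrib[symmetric] algebra_simps)
  also have "\<dots> = x \<bullet> y" using unit_col[OF XM] by (simp add: inner_vec_def)
  finally show ?thesis .
qed

lemma tangent_Tm:
  assumes XM: "X \<in> circ_manifold" and U: "U \<in> tangent_space X"
  shows "U = Tm X (\<chi> i. - X$2$i * U$1$i + X$1$i * U$2$i)"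
proof -
  have "U$k$i = Tm X (\<chi> i. - X$2$i * U$1$i + X$1$i * U$2$i) $ k $ i" for k i
  proof -
    have u: "X$1$i * X$1$i + X$2$i * X$2$i = 1" using unit_col[OF XM] .
    have o: "X$1$i * U$1$i + X$2$i * U$2$i = 0" using U by (simp add: tangent_entry)
    show ?thesis using exhaust_2[of k]
    proof (elim disjE)
      assume k: "k = 1"
      have "Tm X (\<chi> i. - X$2$i * U$1$i + X$1$i * U$2$i) $ k $ i = (- X$2$i * U$1$i + X$1$i * U$2$i) * - X$2$i"
        unfolding k T1 vec_lambda_beta ..
      also have "\<dots> = U$1$i * (X$1$i * X$1$i + X$2$i * X$2$i) - X$1$i * (X$1$i * U$1$i + X$2$i * U$2$i)" by (simp add: algebra_simps)
      also have "\<dots> = U$1$i" unfolding u o by simp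
      finally show ?thesis unfolding k by (rule sym)
    next
      assume k: "k = 2"
      have "Tm X (\<chi> i. - X$2$i * U$1$i + X$1$i * U$2$i) $ k $ i = (- X$2$i * U$1$i + X$1$i * U$2$i) * X$1$i"
        unfolding k T2 vec_lambda_beta ..
      also have "\<dots> = U$2$i * (X$1$i * X$1$i + X$2$i * X$2$i) - X$2$i * (X$1$i * U$1$i + X$2$i * U$2$i)" by (simp add: algebra_simps)
      also have "\<dots> = U$2$i" unfolding u o by simp
      finally show ?thesis unfolding k by (rule sym)
    qed
  qed
  then show ?thesis unfolding vec_eq_iff by blast
qed


lemma Tm_inj:
  assumes XM: "X \<in> circ_manifold"
  shows "inj (Tm X)"
proof (rule injI)
  fix x y assume e: "Tm X x = Tm X y"
  show "x = y" unfolding vec_eq_iff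
  proof
    fix i
    have u: "X$1$i * X$1$i + X$2$i * X$2$i = 1" using unit_col[OF XM] .
    have a: "x$i * - X$2$i = y$i * - X$2$i" using arg_cong[OF e, of "\<lambda>U. U$1$i"] by (simp only: T1)
    have b: "x$i * X$1$i = y$i * X$1$i" using arg_cong[OF e, of "\<lambda>U. U$2$i"] by (simp only: T2)
    have "x$i = x$i * (X$1$i * X$1$i + X$2$i * X$2$i)" unfolding u by simp
    also have "\<dots> = (x$i * X$1$i) * X$1$i + (x$i * - X$2$i) * - X$2$i" by (simp add: algebra_simps)
    also have "\<dots> = (y$i * X$1$i) * X$1$i + (y$i * - X$2$i) * - X$2$i" unfolding a b ..
    also have "\<dots> = y$i * (X$1$i * X$1$i + X$2$i * X$2$i)" by (simp add: algebra_simps)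
    also have "\<dots> = y$i" unfolding u by simp
    finally show "x$i = y$i" .
  qed
qed




lemma lap_entry: "laplacian N $ i $ j = (if i = j then (\<Sum>l\<in>UNIV. N$i$l) else 0) - N$i$j"
  by (simp add: laplacian_def diag_mat_def matrix_vector_mult_def)

lemma neg_mv: "(- A) *v v = - (A *v (v::real^'n))"
  by (simp add: vec_eq_iff matrix_vector_mult_def sum_negf)

lemma Tm_scale: "Tm X (c *\<^sub>R v) = c *\<^sub>R Tm X v"
  by (simp add: vec_eq_iff Tm_def)

lemma mat_id:
  fixes W :: "real^'n^'n" and X :: "real^'n^2"
  assumes sym: "transpose W = W"
  shows "ddiag (transpose X ** X ** hadamard W (entrywise \<phi>' (transpose X ** X)))
              - hadamard (hadamard W (entrywise \<phi>' (transpose X ** X))) (transpose X ** X)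
         - laplacian (hadamard (hadamard W (entrywise \<phi>'' (transpose X ** X)))
                                  (entrywise (\<lambda>t. 1 - t^2) (transpose X ** X)))
       = laplacian (hadamard W (entrywise (\<lambda>t. t * \<phi>' t - (1 - t^2) * \<phi>'' t) (transpose X ** X)))"
proof -
  have d: "(transpose X ** X ** hadamard W (entrywise \<phi>' (transpose X ** X))) $ i $ i
      = (\<Sum>l\<in>UNIV. W$i$l * \<phi>' (tt X i l) * tt X i l)" for i
  proof -
    have "(transpose X ** X ** hadamard W (entrywise \<phi>' (transpose X ** X))) $ i $ i
       = (\<Sum>l\<in>UNIV. tt X i l * (W$l$i * \<phi>' (tt X l i)))"
      by (simp add: matrix_matrix_mult_def[of "transpose X ** X"] hadamard_def entrywise_def tt_mat)
    also have "\<dots> = (\<Sum>l\<in>UNIV. W$i$l * \<phi>' (tt X i l) * tt X i l)"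
      by (rule sum.cong[OF refl]) (metis Wsym[OF sym] tt_sym mult.commute mult.assoc)
    finally show ?thesis .
  qed
  have d2: "ddiag (transpose X ** X ** hadamard W (entrywise \<phi>' (transpose X ** X))) $ i $ j
      = (if i = j then (\<Sum>l\<in>UNIV. W$i$l * \<phi>' (tt X i l) * tt X i l) else 0)" for i j
    by (simp add: ddiag_def d)
  show ?thesis
    unfolding vec_eq_iff vector_minus_component d2 lap_entry
    by (auto simp: hadamard_def hadamard_def entrywise_def tt_mat sum_subtractf[symmetric] sum.distrib[symmetric]
        algebra_simps intro!: sum.cong)
qed



theorem mainTheorem10:
  fixes W :: "real^'n^'n" and \<phi> \<phi>' \<phi>'' :: "real \<Rightarrow> real" and X :: "real^'n^2"
  assumes "transpose W = W"
    and "\<forall>i j. 0 \<le> W$i$j"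
    and "\<forall>t. (\<phi> has_real_derivative \<phi>' t) (at t)"
    and "\<forall>t. (\<phi>' has_real_derivative \<phi>'' t) (at t)"
    and "continuous_on UNIV \<phi>''"
    and "X \<in> circ_manifold"
  shows "(\<forall>\<mu>::real. dim {U \<in> tangent_space X. rhess (fbar W \<phi>) X U = \<mu> *\<^sub>R U}
             = dim {v :: real^'n.
                 (- laplacian (hadamard W (entrywise (\<lambda>t. t * \<phi>' t - (1 - t^2) * \<phi>'' t)
                                            (transpose X ** X)))) *v v = \<mu> *\<^sub>R v})
     \<and> ((rgrad (fbar W \<phi>) X = 0 \<and>
          (\<forall>U\<in>tangent_space X. U \<bullet> rhess (fbar W \<phi>) X U \<le> 0))
        \<longleftrightarrow>
        (X ** ddiag (transpose X ** X ** hadamard W (entrywise \<phi>' (transpose X ** X)))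
           = X ** hadamard W (entrywise \<phi>' (transpose X ** X))
         \<and> loewner_ge
             (ddiag (transpose X ** X ** hadamard W (entrywise \<phi>' (transpose X ** X)))
              - hadamard (hadamard W (entrywise \<phi>' (transpose X ** X))) (transpose X ** X))
             (laplacian (hadamard (hadamard W (entrywise \<phi>'' (transpose X ** X)))
                                  (entrywise (\<lambda>t. 1 - t^2) (transpose X ** X))))))"
proof -
  note sym = assms(1) and d = assms(3) and d2 = assms(4) and XM = assms(6)
  define M where "M = hadamard W (entrywise (\<lambda>t. t * \<phi>' t - (1 - t^2) * \<phi>'' t) (transpose X ** X))"
  define Hm where "Hm = - laplacian M"
  have RT: "rhess (fbar W \<phi>) X (Tm X v) = Tm X (Hm *v v)" for v
    unfolding Hm_def M_def by (rule rhess_T[OF sym d d2 XM])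
  have inj: "inj (Tm X)" by (rule Tm_inj[OF XM])
  have P1: "dim {U \<in> tangent_space X. rhess (fbar W \<phi>) X U = \<mu> *\<^sub>R U} = dim {v. Hm *v v = \<mu> *\<^sub>R v}" for \<mu>
  proof -
    have "{U \<in> tangent_space X. rhess (fbar W \<phi>) X U = \<mu> *\<^sub>R U} = Tm X ` {v. Hm *v v = \<mu> *\<^sub>R v}"
    proof (intro set_eqI iffI)
      fix U assume "U \<in> {U \<in> tangent_space X. rhess (fbar W \<phi>) X U = \<mu> *\<^sub>R U}"
      then have U: "U \<in> tangent_space X" and e: "rhess (fbar W \<phi>) X U = \<mu> *\<^sub>R U" by auto
      define v where "v = (\<chi> i. - X$2$i * U$1$i + X$1$i * U$2$i)"
      have Uv: "U = Tm X v" unfolding v_def by (rule tangent_Tm[OF XM U])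
      have "Tm X (Hm *v v) = Tm X (\<mu> *\<^sub>R v)" using e unfolding Uv RT Tm_scale .
      then have "Hm *v v = \<mu> *\<^sub>R v" using inj by (simp add: inj_eq)
      then show "U \<in> Tm X ` {v. Hm *v v = \<mu> *\<^sub>R v}" using Uv by blast
    next
      fix U assume "U \<in> Tm X ` {v. Hm *v v = \<mu> *\<^sub>R v}"
      then obtain v where U: "U = Tm X v" and e: "Hm *v v = \<mu> *\<^sub>R v" by auto
      show "U \<in> {U \<in> tangent_space X. rhess (fbar W \<phi>) X U = \<mu> *\<^sub>R U}"
        using Tm_tangent RT e Tm_scale U by auto
    qed
    moreover have "dim (Tm X ` {v. Hm *v v = \<mu> *\<^sub>R v}) = dim {v. Hm *v v = \<mu> *\<^sub>R v}"
      by (rule dim_image_eq[OF Tm_linear]) (meson inj inj_on_subset subset_UNIV)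
    ultimately show ?thesis by simp
  qed
  define A where "A = hadamard W (entrywise \<phi>' (transpose X ** X))"
  have G: "rgrad (fbar W \<phi>) X = 0 \<longleftrightarrow> X ** ddiag (transpose X ** X ** A) = X ** A"
  proof -
    have "rgrad (fbar W \<phi>) X = X ** A - X ** ddiag (transpose X ** X ** A)"
      unfolding rgrad_def egrad_eq[OF sym d] proj_def Am_def A_def matrix_mul_assoc ..
    then show ?thesis by auto
  qed
  have N: "(\<forall>U\<in>tangent_space X. U \<bullet> rhess (fbar W \<phi>) X U \<le> 0) \<longleftrightarrow> (\<forall>v. v \<bullet> (Hm *v v) \<le> 0)"
  proof
    assume h: "\<forall>U\<in>tangent_space X. U \<bullet> rhess (fbar W \<phi>) X U \<le> 0"
    show "\<forall>v. v \<bullet> (Hm *v v) \<le> 0"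
    proof
      fix v
      have "Tm X v \<bullet> rhess (fbar W \<phi>) X (Tm X v) \<le> 0" using h Tm_tangent by blast
      then show "v \<bullet> (Hm *v v) \<le> 0" unfolding RT Tm_inner[OF XM] .
    qed
  next
    assume h: "\<forall>v. v \<bullet> (Hm *v v) \<le> 0"
    show "\<forall>U\<in>tangent_space X. U \<bullet> rhess (fbar W \<phi>) X U \<le> 0"
    proof
      fix U assume U: "U \<in> tangent_space X"
      define v where "v = (\<chi> i. - X$2$i * U$1$i + X$1$i * U$2$i)"
      have Uv: "U = Tm X v" unfolding v_def by (rule tangent_Tm[OF XM U])
      show "U \<bullet> rhess (fbar W \<phi>) X U \<le> 0" unfolding Uv RT Tm_inner[OF XM] using h by blast
    qed
  qed
  have L: "loewner_ge
             (ddiag (transpose X ** X ** A) - hadamard A (transpose X ** X))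
             (laplacian (hadamard (hadamard W (entrywise \<phi>'' (transpose X ** X)))
                                  (entrywise (\<lambda>t. 1 - t^2) (transpose X ** X))))
        \<longleftrightarrow> (\<forall>v. v \<bullet> (Hm *v v) \<le> 0)"
    unfolding loewner_ge_def A_def mat_id[OF sym] psd_def Hm_def M_def neg_mv inner_minus_right
    by auto
  show ?thesis
    using P1 G N L unfolding Hm_def M_def A_def by blast
qed

end
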